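(* Let $I$ be an ideal of a Noetherian ring $A$. Then $I_>\subseteq{}^*I$.
   Context: For $a\in A$, $\operatorname{ord}_I(a)=n$ if $a\in I^n\setminus I^{n+1}$ and $\infty$ if $a\in\bigcap_n I^n$; $\overline{v}_I(a)=\lim_{n\to\infty}\operatorname{ord}_I(a^n)/n$ (the limit exists, possibly $\infty$); $I_>=\{a\in A\mid\overline{v}_I(a)>1\}$. ${}^*I$ is the weak subintegral closure of $I$: $b\in A$ lies in ${}^*I$ if there exist $q\in\mathbb{N}$ and $a_i\in I^i$ ($1\le i\le 2q+1$) with $b^n+\sum_{i=1}^n\binom{n}{i}a_ib^{n-i}=0$ for all $q+1\le n\le 2q+1$. *)

theory Defs
  imports "HOL-Algebra.Algebra" "HOL-Library.Extended_Real"
begin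

primrec ideal_pow :: "('a, 'b) ring_scheme \<Rightarrow> 'a set \<Rightarrow> nat \<Rightarrow> 'a set" where
  "ideal_pow R I 0 = carrier R"
| "ideal_pow R I (Suc n) = ideal_prod R I (ideal_pow R I n)"

definition ord_ideal :: "('a, 'b) ring_scheme \<Rightarrow> 'a set \<Rightarrow> 'a \<Rightarrow> enat" where
  "ord_ideal R I a =
     (if a \<in> (\<Inter>n. ideal_pow R I n) then \<infinity>
      else enat (THE n. a \<in> ideal_pow R I n \<and> a \<notin> ideal_pow R I (Suc n)))"

definition vbar :: "('a, 'b) ring_scheme \<Rightarrow> 'a set \<Rightarrow> 'a \<Rightarrow> ereal" where
  "vbar R I a = lim (\<lambda>n. ereal_of_enat (ord_ideal R I (a [^]\<^bsub>R\<^esub> n)) / ereal (real n))"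

definition I_gt :: "('a, 'b) ring_scheme \<Rightarrow> 'a set \<Rightarrow> 'a set" where
  "I_gt R I = {a \<in> carrier R. vbar R I a > 1}"

definition weak_subintegral_closure :: "('a, 'b) ring_scheme \<Rightarrow> 'a set \<Rightarrow> 'a set" where
  "weak_subintegral_closure R I =
     {b \<in> carrier R. \<exists>(q::nat) (a::nat \<Rightarrow> 'a).
        (\<forall>i \<in> {1..2*q+1}. a i \<in> ideal_pow R I i) \<and>
        (\<forall>n \<in> {q+1..2*q+1}.
           b [^]\<^bsub>R\<^esub> n \<oplus>\<^bsub>R\<^esub>
             (\<Oplus>\<^bsub>R\<^esub>i\<in>{1..n}. add_pow R (n choose i) (a i \<otimes>\<^bsub>R\<^esub> b [^]\<^bsub>R\<^esub> (n - i)))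
           = \<zero>\<^bsub>R\<^esub>)}"

end

theory Submission
  imports Defs
begin

lemma lam_exists:
  "\<exists>lam::nat\<Rightarrow>int. (\<forall>i. (i \<le> q \<or> N < i) \<longrightarrow> lam i = 0) \<and>
     (\<forall>n\<in>{q+1..N}. (\<Sum>i\<in>{1..n}. int (n choose i) * lam i) = -1)"
proof (induct N)
  case 0 then show ?case by (intro exI[of _ "\<lambda>_. 0"]) auto
next
  case (Suc N)
  then obtain lam :: "nat\<Rightarrow>int" where z: "\<forall>i. (i \<le> q \<or> N < i) \<longrightarrow> lam i = 0"
    and s: "\<forall>n\<in>{q+1..N}. (\<Sum>i\<in>{1..n}. int (n choose i) * lam i) = -1" by blast
  show ?case
  proof (cases "Suc N \<le> q")
    case True then show ?thesis using z by (intro exI[of _ lam]) auto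
  next
    case False
    define v where "v = -1 - (\<Sum>i\<in>{1..N}. int (Suc N choose i) * lam i)"
    define lam' where "lam' = lam(Suc N := v)"
    have z': "\<forall>i. (i \<le> q \<or> Suc N < i) \<longrightarrow> lam' i = 0" using z False unfolding lam'_def by auto
    have s': "(\<Sum>i\<in>{1..n}. int (n choose i) * lam' i) = -1" if "n\<in>{q+1..Suc N}" for n
    proof (cases "n = Suc N")
      case True
      have "(\<Sum>i\<in>{1..Suc N}. int (Suc N choose i) * lam' i) = (\<Sum>i\<in>{1..N}. int (Suc N choose i) * lam' i) + lam' (Suc N)"
        by simp
      also have "(\<Sum>i\<in>{1..N}. int (Suc N choose i) * lam' i) = (\<Sum>i\<in>{1..N}. int (Suc N choose i) * lam i)"
        unfolding lam'_def by (intro sum.cong) auto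
      finally show ?thesis using True by (simp add: lam'_def v_def)
    next
      case False
      then have n: "n \<in> {q+1..N}" using that by auto
      have "(\<Sum>i\<in>{1..n}. int (n choose i) * lam' i) = (\<Sum>i\<in>{1..n}. int (n choose i) * lam i)"
        unfolding lam'_def using n by (intro sum.cong) auto
      then show ?thesis using s n by simp
    qed
    show ?thesis using z' s' by blast
  qed
qed

lemma fekete_aux:
  fixes g :: "nat \<Rightarrow> nat"
  assumes le: "\<And>n. 1 \<le> n \<Longrightarrow> g n \<le> n"
    and sup: "\<And>n k. 1 \<le> k \<Longrightarrow> (n div k) * g k \<le> g n"
  shows "\<exists>s\<le>1. (\<lambda>n. real (g n) / real n) \<longlonglongrightarrow> s"
proof -
  define h where "h n = real (g n) / real n" for n
  define s where "s = (SUP n\<in>{1..}. h n)"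
  have h1: "h n \<le> 1" if "1 \<le> n" for n :: nat
    using le[OF that] that unfolding h_def by (simp add: divide_le_eq)
  have h0: "0 \<le> h n" for n unfolding h_def by simp
  have bdd: "bdd_above (h ` {1..})" using h1 by (intro bdd_aboveI[of _ 1]) auto
  have hs: "h n \<le> s" if "1 \<le> n" for n unfolding s_def using bdd that by (intro cSUP_upper) auto
  have s1: "s \<le> 1" unfolding s_def using h1 by (intro cSUP_least) auto
  have "h \<longlonglongrightarrow> s"
  proof (rule LIMSEQ_I)
    fix r :: real assume r: "0 < r"
    have "s - r/2 < s" using r by simp
    then obtain k where k: "k \<in> {1..}" "s - r/2 < h k"
      unfolding s_def using less_cSUP_iff[OF _ bdd, of "s - r/2"] by (auto simp: s_def)
    define N where "N = nat \<lceil>2 * real k / r\<rceil> + 1 + k"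
    have "norm (h n - s) < r" if n: "N \<le> n" for n
    proof -
      have k1: "1 \<le> k" using k by simp
      have n1: "1 \<le> n" "k \<le> n" using n k1 unfolding N_def by auto
      have nr: "2 * real k / r < real n"
      proof -
        have "2 * real k / r \<le> real (nat \<lceil>2 * real k / r\<rceil>)" by linarith
        also have "\<dots> < real n" using n unfolding N_def by linarith
        finally show ?thesis .
      qed
      have kn: "real k / real n < r / 2" using nr r n1 by (simp add: field_simps)
      have dk: "real n - real k \<le> real (n div k) * real k"
      proof -
        have "n = (n div k) * k + n mod k" by simp
        moreover have "n mod k < k" using k1 by simp
        ultimately have "real n \<le> real (n div k) * real k + real k"
          by (metis less_imp_le_nat nat_add_left_cancel_le of_nat_add of_nat_le_iff of_nat_mult)
        then show ?thesis by simp
      qed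
      have gk: "real (g k) \<le> real k" using le[OF k1] by simp
      have gn: "real (n div k) * real (g k) \<le> real (g n)" using sup[OF k1, of n]
        by (metis of_nat_le_iff of_nat_mult)
      have "(real n - real k) * real (g k) \<le> real (n div k) * real k * real (g k)"
        using dk by (simp add: mult_right_mono)
      also have "\<dots> \<le> real (g n) * real k" using gn k1
        by (metis mult.commute mult.left_commute mult_right_mono of_nat_0_le_iff)
      finally have A: "(real n - real k) * real (g k) \<le> real (g n) * real k" .
      have "h k - real k / real n \<le> h n"
      proof -
        have B: "(real n - real k) * real (g k) / (real k * real n) \<le> real (g n) * real k / (real k * real n)"
          using A by (intro divide_right_mono) auto
        have e1: "(real n - real k) * real (g k) / (real k * real n) = h k - real (g k) / real n"
          using n1 k1 unfolding h_def by (simp add: field_simps)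
        have e2: "real (g n) * real k / (real k * real n) = h n" using k1 unfolding h_def by simp
        have "h k - real (g k) / real n \<le> h n" using B e1 e2 by simp
        moreover have "real (g k) / real n \<le> real k / real n" using gk by (simp add: divide_right_mono)
        ultimately show ?thesis by linarith
      qed
      then have "s - r < h n" using k kn by linarith
      moreover have "h n \<le> s" using hs n1 by simp
      ultimately show ?thesis by simp
    qed
    then show "\<exists>no. \<forall>n\<ge>no. norm (h n - s) < r" by blast
  qed
  then show ?thesis using s1 unfolding h_def by blast
qed


context cring begin

lemma ip_ideal: "ideal I R \<Longrightarrow> ideal (ideal_pow R I n) R"
  by (induct n) (auto simp: oneideal ideal_prod_is_ideal)

lemma ip_Suc_sub: "ideal I R \<Longrightarrow> ideal_pow R I (Suc n) \<subseteq> ideal_pow R I n"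
  using ideal_prod_inter[OF _ ip_ideal] by auto

lemma ip_anti: "ideal I R \<Longrightarrow> m \<le> n \<Longrightarrow> ideal_pow R I n \<subseteq> ideal_pow R I m"
proof (induct n)
  case 0 then show ?case by simp
next
  case (Suc n)
  show ?case
  proof (cases "m = Suc n")
    case True then show ?thesis by simp
  next
    case False then have "m \<le> n" using Suc.prems by simp
    then show ?thesis using Suc ip_Suc_sub[OF Suc(2), of n] by blast
  qed
qed

lemma ip_add: "ideal I R \<Longrightarrow> ideal_pow R I (m + n) = ideal_pow R I m \<cdot> ideal_pow R I n"
proof (induct m)
  case 0
  have "carrier R \<cdot> ideal_pow R I n = ideal_pow R I n \<cdot> carrier R"
    by (rule ideal_prod_commute[OF oneideal ip_ideal[OF 0]])
  then show ?case using ideal_prod_one[OF ip_ideal[OF 0, of n]] by simp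
next
  case (Suc m)
  have "ideal_pow R I (Suc m + n) = I \<cdot> (ideal_pow R I m \<cdot> ideal_pow R I n)" using Suc by simp
  also have "\<dots> = (I \<cdot> ideal_pow R I m) \<cdot> ideal_pow R I n"
    using ideal_prod_assoc[OF Suc(2) ip_ideal[OF Suc(2)] ip_ideal[OF Suc(2)]] by simp
  finally show ?case by simp
qed

lemma ip_mult: "ideal I R \<Longrightarrow> x \<in> ideal_pow R I m \<Longrightarrow> y \<in> ideal_pow R I n \<Longrightarrow> x \<otimes> y \<in> ideal_pow R I (m + n)"
  unfolding ip_add[of I m n] by (rule ideal_prod.prod)

lemma ip_pow: "ideal I R \<Longrightarrow> x \<in> ideal_pow R I m \<Longrightarrow> x [^] j \<in> ideal_pow R I (j * m)"
proof (induct j)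
  case 0 then show ?case by simp
next
  case (Suc j)
  have "x [^] j \<otimes> x \<in> ideal_pow R I (j * m + m)" by (rule ip_mult[OF Suc(2) Suc(1)[OF Suc(2,3)] Suc(3)])
  moreover have "Suc j * m = j * m + m" by simp
  ultimately show ?case by (metis nat_pow_Suc)
qed

lemma ip_rclosed: "ideal I R \<Longrightarrow> x \<in> ideal_pow R I m \<Longrightarrow> y \<in> carrier R \<Longrightarrow> x \<otimes> y \<in> ideal_pow R I m"
  by (rule ideal.I_r_closed[OF ip_ideal])

lemma ip_exists: "ideal I R \<Longrightarrow> x \<notin> ideal_pow R I N \<Longrightarrow> x \<in> carrier R \<Longrightarrow> \<exists>m<N. x \<in> ideal_pow R I m \<and> x \<notin> ideal_pow R I (Suc m)"
proof (induct N)
  case 0 then show ?case by simp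
next
  case (Suc N)
  show ?case
  proof (cases "x \<in> ideal_pow R I N")
    case True then show ?thesis using Suc.prems(2) by (intro exI[of _ N]) simp
  next
    case False then obtain m where "m < N" "x \<in> ideal_pow R I m \<and> x \<notin> ideal_pow R I (Suc m)" using Suc.hyps Suc.prems(1,3) by blast
    then show ?thesis by (intro exI[of _ m]) simp
  qed
qed

lemma ord_eq: assumes "ideal I R" "x \<in> ideal_pow R I m" "x \<notin> ideal_pow R I (Suc m)"
  shows "ord_ideal R I x = enat m"
proof -
  have u: "n = m" if "x \<in> ideal_pow R I n" "x \<notin> ideal_pow R I (Suc n)" for n
  proof (rule ccontr)
    assume "n \<noteq> m"
    then consider "n < m" | "m < n" by linarith
    then show False
    proof cases
      case 1 then have "Suc n \<le> m" by simp
      then show False using ip_anti[OF assms(1) \<open>Suc n \<le> m\<close>] assms that by blast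
    next
      case 2 then have "Suc m \<le> n" by simp
      then show False using ip_anti[OF assms(1) \<open>Suc m \<le> n\<close>] assms that by blast
    qed
  qed
  have "x \<notin> (\<Inter>n. ideal_pow R I n)" using assms(3) by blast
  moreover have "(THE n. x \<in> ideal_pow R I n \<and> x \<notin> ideal_pow R I (Suc n)) = m"
    apply (rule the_equality) using u assms(2,3) by blast+
  ultimately show ?thesis unfolding ord_ideal_def by (simp only: if_False)
qed


lemma finsum_int_pow:
  assumes "x \<in> carrier R" "finite A"
  shows "(\<Oplus>i\<in>A. add_pow R ((c i :: int)) x) = add_pow R ((\<Sum>i\<in>A. c i)) x"
  using assms(2)
proof (induct A rule: finite_induct)
  case empty then show ?case using add_pow_int_ge[of "0::int" R x] by simp
next
  case (insert j F)
  have "(\<Oplus>i\<in>insert j F. add_pow R (c i) x) = add_pow R (c j) x \<oplus> (\<Oplus>i\<in>F. add_pow R (c i) x)"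
    using insert assms(1) by (intro finsum_insert) auto
  also have "\<dots> = add_pow R (c j + (\<Sum>i\<in>F. c i)) x"
    using insert assms(1) by (simp add: add.int_pow_mult)
  finally show ?case using insert by simp
qed

lemma weak_mem:
  assumes I: "ideal I R" and b: "b \<in> carrier R"
    and big: "\<And>i. q < i \<Longrightarrow> b [^] i \<in> ideal_pow R I i"
  shows "b \<in> weak_subintegral_closure R I"
proof -
  obtain lam :: "nat \<Rightarrow> int" where lz: "\<And>i. i \<le> q \<Longrightarrow> lam i = 0"
    and ls: "\<And>n. n \<in> {q+1..2*q+1} \<Longrightarrow> (\<Sum>i\<in>{1..n}. int (n choose i) * lam i) = -1"
    using lam_exists[of q "2*q+1"] by blast
  define a where "a i = add_pow R (lam i) (b [^] i)" for i
  have ac: "a i \<in> carrier R" for i unfolding a_def using b by simp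
  have aI: "a i \<in> ideal_pow R I i" for i
  proof (cases "i \<le> q")
    case True
    then have "a i = \<zero>" unfolding a_def using lz add_pow_int_ge[of "0::int" R "b [^] i"] by simp
    then show ?thesis using additive_subgroup.zero_closed[OF ideal.axioms(1)[OF ip_ideal[OF I]]] by simp
  next
    case False
    have "a i = (add_pow R (lam i) \<one>) \<otimes> b [^] i" unfolding a_def using b
      by (simp add: add_pow_ldistr_int)
    then show ?thesis using False big[of i] ideal.I_l_closed[OF ip_ideal[OF I]] b by simp
  qed
  have eq: "b [^] n \<oplus> (\<Oplus>i\<in>{1..n}. add_pow R ((n choose i)) (a i \<otimes> b [^] (n - i))) = \<zero>"
    if n: "n \<in> {q+1..2*q+1}" for n
  proof -
    have t: "add_pow R ((n choose i)) (a i \<otimes> b [^] (n - i)) = add_pow R (int (n choose i) * lam i) (b [^] n)"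
      if "i \<in> {1..n}" for i
    proof -
      have "a i \<otimes> b [^] (n - i) = add_pow R (lam i) (b [^] i \<otimes> b [^] (n - i))"
        unfolding a_def using b by (simp add: add_pow_ldistr_int)
      also have "b [^] i \<otimes> b [^] (n - i) = b [^] n"
        using b that nat_pow_mult[of b i "n - i"] by simp
      finally have "a i \<otimes> b [^] (n - i) = add_pow R (lam i) (b [^] n)" .
      then have "add_pow R ((n choose i)) (a i \<otimes> b [^] (n - i)) = add_pow R (int (n choose i)) (add_pow R (lam i) (b [^] n))"
        using add_pow_int_ge[of "int (n choose i)" R] by simp
      also have "\<dots> = add_pow R (lam i * int (n choose i)) (b [^] n)"
        using b by (simp add: add.int_pow_pow)
      finally show ?thesis by (simp add: mult.commute)
    qed
    have "(\<Oplus>i\<in>{1..n}. add_pow R ((n choose i)) (a i \<otimes> b [^] (n - i))) = (\<Oplus>i\<in>{1..n}. add_pow R (int (n choose i) * lam i) (b [^] n))"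
      using t b ac by (intro add.finprod_cong') auto
    also have "\<dots> = add_pow R ((-1::int)) (b [^] n)"
      using finsum_int_pow[of "b [^] n" "{1..n}"] b ls[OF n] by simp
    finally have s: "(\<Oplus>i\<in>{1..n}. add_pow R ((n choose i)) (a i \<otimes> b [^] (n - i))) = add_pow R ((-1::int)) (b [^] n)" .
    have "b [^] n = add_pow R ((1::int)) (b [^] n)"
      using add_pow_int_ge[of "1::int" R] b by simp
    then have "b [^] n \<oplus> add_pow R ((-1::int)) (b [^] n) = add_pow R ((1 + -1 :: int)) (b [^] n)"
      using b by (metis add.int_pow_mult nat_pow_closed)
    then show ?thesis using s add_pow_int_ge[of "0::int" R "b [^] n"] by simp
  qed
  show ?thesis unfolding weak_subintegral_closure_def
    using b aI eq by blast
qed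


lemma big_powers:
  assumes I: "ideal I R" and b: "b \<in> carrier R" and k1: "1 \<le> k"
    and bk: "b [^] k \<in> ideal_pow R I (Suc k)" and i: "k * k < i"
  shows "b [^] i \<in> ideal_pow R I i"
proof -
  define j where "j = i div k"
  define r where "r = i mod k"
  have ieq: "i = k * j + r" unfolding j_def r_def by simp
  have rk: "r < k" unfolding r_def using k1 by simp
  have "k * (j + 1) = k * j + k" by simp
  then have "k * k < k * (j + 1)" using i ieq rk by linarith
  then have "k < j + 1" by (metis mult_less_cancel1)
  then have kj: "k \<le> j" by simp
  have "(b [^] k) [^] j \<in> ideal_pow R I (j * Suc k)" by (rule ip_pow[OF I bk])
  then have "(b [^] k) [^] j \<otimes> b [^] r \<in> ideal_pow R I (j * Suc k)"
    using b by (intro ip_rclosed[OF I]) auto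
  moreover have "(b [^] k) [^] j \<otimes> b [^] r = b [^] i"
    using b ieq by (simp add: nat_pow_pow nat_pow_mult)
  moreover have "i \<le> j * Suc k" using ieq rk kj by (simp add: algebra_simps)
  ultimately show ?thesis using ip_anti[OF I \<open>i \<le> j * Suc k\<close>] by (metis subsetD)
qed

lemma main_incl:
  assumes "ideal I R"
  shows "I_gt R I \<subseteq> weak_subintegral_closure R I"
proof
  fix b assume "b \<in> I_gt R I"
  then have b: "b \<in> carrier R" and v: "vbar R I b > 1" unfolding I_gt_def by auto
  note I = assms(1)
  show "b \<in> weak_subintegral_closure R I"
  proof (cases "\<exists>k\<ge>1. b [^] k \<in> ideal_pow R I (Suc k)")
    case True
    then obtain k where "1 \<le> k" "b [^] k \<in> ideal_pow R I (Suc k)" by blast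
    then show ?thesis using weak_mem[OF I b, of "k*k"] big_powers[OF I b] by blast
  next
    case False
    have ex: "\<exists>m. b [^] n \<in> ideal_pow R I m \<and> b [^] n \<notin> ideal_pow R I (Suc m)" if "1 \<le> n" for n :: nat
    proof -
      have "b [^] n \<notin> ideal_pow R I (Suc n)" using False that by blast
      from ip_exists[OF I this nat_pow_closed[OF b]] show ?thesis by blast
    qed
    define g where "g n = (SOME m. b [^] n \<in> ideal_pow R I m \<and> b [^] n \<notin> ideal_pow R I (Suc m))" for n :: nat
    have gp: "b [^] n \<in> ideal_pow R I (g n) \<and> b [^] n \<notin> ideal_pow R I (Suc (g n))" if "1 \<le> n" for n :: nat
      unfolding g_def by (rule someI_ex[OF ex[OF that]])
    have le: "g n \<le> n" if n: "1 \<le> n" for n :: nat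
    proof (rule ccontr)
      assume "\<not> g n \<le> n"
      then have "Suc n \<le> g n" by simp
      then have "b [^] n \<in> ideal_pow R I (Suc n)" using gp[OF n] ip_anti[OF I \<open>Suc n \<le> g n\<close>] by blast
      then show False using False n by blast
    qed
    have sup: "(n div k) * g k \<le> g n" if k: "1 \<le> k" for n k :: nat
    proof (cases "n = 0")
      case True then show ?thesis by simp
    next
      case False
      then have n: "1 \<le> n" by simp
      have "(b [^] k) [^] (n div k) \<in> ideal_pow R I ((n div k) * g k)"
        by (rule ip_pow[OF I]) (use gp[OF k] in blast)
      then have "(b [^] k) [^] (n div k) \<otimes> b [^] (n mod k) \<in> ideal_pow R I ((n div k) * g k)"
        using b by (intro ip_rclosed[OF I]) auto
      moreover have "(b [^] k) [^] (n div k) \<otimes> b [^] (n mod k) = b [^] n"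
        using b by (simp add: nat_pow_pow nat_pow_mult)
      ultimately have A: "b [^] n \<in> ideal_pow R I ((n div k) * g k)" by simp
      show ?thesis
      proof (rule ccontr)
        assume "\<not> ?thesis"
        then have "Suc (g n) \<le> (n div k) * g k" by simp
        then have "b [^] n \<in> ideal_pow R I (Suc (g n))" using A ip_anti[OF I \<open>Suc (g n) \<le> (n div k) * g k\<close>] by blast
        then show False using gp[OF n] by blast
      qed
    qed
    obtain s where s1: "s \<le> 1" and st: "(\<lambda>n. real (g n) / real n) \<longlonglongrightarrow> s"
      using fekete_aux[of g] le sup by blast
    have ev: "\<forall>\<^sub>F n in sequentially. ereal (real (g n) / real n) =
        ereal_of_enat (ord_ideal R I (b [^] n)) / ereal (real n)"
    proof (rule eventually_sequentiallyI[of 1])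
      fix n :: nat assume n: "1 \<le> n"
      have "ord_ideal R I (b [^] n) = enat (g n)" using gp[OF n] ord_eq[OF I, of "b [^] n" "g n"] by blast
      then show "ereal (real (g n) / real n) = ereal_of_enat (ord_ideal R I (b [^] n)) / ereal (real n)"
        using n by simp
    qed
    have "(\<lambda>n. ereal (real (g n) / real n)) \<longlonglongrightarrow> ereal s" using st by (rule tendsto_ereal)
    then have "(\<lambda>n. ereal_of_enat (ord_ideal R I (b [^] n)) / ereal (real n)) \<longlonglongrightarrow> ereal s"
      using ev by (rule Lim_transform_eventually)
    then have "vbar R I b = ereal s" unfolding vbar_def by (rule limI)
    then show ?thesis using v s1 by simp
  qed
qed

end

theorem proposition4p4:
  fixes R :: "('a, 'b) ring_scheme" and I :: "'a set"
  assumes "cring R" and "noetherian_ring R" and "ideal I R"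
  shows "I_gt R I \<subseteq> weak_subintegral_closure R I"
  using cring.main_incl[OF assms(1,3)] .

end
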